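(* For every set $S\subseteq\mathbb{R}$ of nonnegative reals, the category $\overrightarrow{\mathbf{U}}_S$ has the Ramsey property. Consequently, the category $\overrightarrow{\mathbf{U}}$ of all finite convexly ordered ultrametric spaces with embeddings has the Ramsey property.
   Context: A convexly ordered ultrametric space is a structure $(U,d,<)$ where $d:U^2\to\mathbb{R}$ is an ultrametric (a metric with $d(x,z)\le\max\{d(x,y),d(y,z)\}$) and $<$ is a linear order on $U$ such that every closed ball $B(u,r)=\{y: d(u,y)\le r\}$ is convex with respect to $<$ (if $x,y\in B(u,r)$ and $x<z<y$ then $z\in B(u,r)$). Embeddings are injections $f$ with $d(f(x),f(y))=d(x,y)$ and $x<y\iff f(x)<f(y)$. The spectre of a space is $\mathrm{spec}(\mathcal{U})=\{d(x,y):x,y\in U\}$. $\overrightarrow{\mathbf{U}}$ is the category of finite convexly ordered ultrametric spaces with embeddings, and $\overrightarrow{\mathbf{U}}_S$ is its full subcategory of those $\mathcal{U}$ with $\mathrm{spec}(\mathcal{U})\subseteq S$. A category $\mathbf{C}$ has the Ramsey property if for every integer $k\ge2$ and all objects $\mathcal{A},\mathcal{B}$ with $\hom(\mathcal{A},\mathcal{B})\ne\varnothing$ there is an object $\mathcal{C}$ such that for every partition $\hom(\mathcal{A},\mathcal{C})=\Sigma_1\cup\dots\cup\Sigma_k$ into pairwise disjoint sets there are $i$ and $w\in\hom(\mathcal{B},\mathcal{C})$ with $w\cdot\hom(\mathcal{A},\mathcal{B})\subseteq\Sigma_i$. *)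

theory Defs
  imports Main "HOL-Library.FuncSet" Complex_Main
begin

record 'a ous =
  carrier :: "'a set"
  dist :: "'a \<Rightarrow> 'a \<Rightarrow> real"
  less :: "'a \<Rightarrow> 'a \<Rightarrow> bool"

definition ultrametric_on :: "'a set \<Rightarrow> ('a \<Rightarrow> 'a \<Rightarrow> real) \<Rightarrow> bool" where
  "ultrametric_on U d \<longleftrightarrow>
     (\<forall>x\<in>U. \<forall>y\<in>U. d x y \<ge> 0 \<and> (d x y = 0 \<longleftrightarrow> x = y) \<and> d x y = d y x) \<and>
     (\<forall>x\<in>U. \<forall>y\<in>U. \<forall>z\<in>U. d x z \<le> d x y + d y z) \<and>
     (\<forall>x\<in>U. \<forall>y\<in>U. \<forall>z\<in>U. d x z \<le> max (d x y) (d y z))"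

definition strict_linear_order_on :: "'a set \<Rightarrow> ('a \<Rightarrow> 'a \<Rightarrow> bool) \<Rightarrow> bool" where
  "strict_linear_order_on U lt \<longleftrightarrow>
     (\<forall>x\<in>U. \<not> lt x x) \<and>
     (\<forall>x\<in>U. \<forall>y\<in>U. \<forall>z\<in>U. lt x y \<and> lt y z \<longrightarrow> lt x z) \<and>
     (\<forall>x\<in>U. \<forall>y\<in>U. x \<noteq> y \<longrightarrow> lt x y \<or> lt y x)"

definition cball_in :: "'a ous \<Rightarrow> 'a \<Rightarrow> real \<Rightarrow> 'a set" where
  "cball_in M u r = {y \<in> carrier M. dist M u y \<le> r}"

definition convex_in :: "'a ous \<Rightarrow> 'a set \<Rightarrow> bool" where
  "convex_in M B \<longleftrightarrow>
     (\<forall>x\<in>B. \<forall>y\<in>B. \<forall>z\<in>carrier M. less M x z \<and> less M z y \<longrightarrow> z \<in> B)"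

definition fcous :: "'a ous \<Rightarrow> bool" where
  "fcous M \<longleftrightarrow> finite (carrier M) \<and> ultrametric_on (carrier M) (dist M) \<and>
     strict_linear_order_on (carrier M) (less M) \<and>
     (\<forall>u\<in>carrier M. \<forall>r::real. convex_in M (cball_in M u r))"

definition spec :: "'a ous \<Rightarrow> real set" where
  "spec M = {dist M x y | x y. x \<in> carrier M \<and> y \<in> carrier M}"

definition hom :: "'a ous \<Rightarrow> 'b ous \<Rightarrow> ('a \<Rightarrow> 'b) set" where
  "hom A B = {f. f \<in> carrier A \<rightarrow>\<^sub>E carrier B \<and> inj_on f (carrier A) \<and>
     (\<forall>x\<in>carrier A. \<forall>y\<in>carrier A. dist B (f x) (f y) = dist A x y \<and>
        (less A x y \<longleftrightarrow> less B (f x) (f y)))}"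

definition ramsey_property :: "'a ous set \<Rightarrow> bool" where
  "ramsey_property Ob \<longleftrightarrow>
     (\<forall>k::nat. k \<ge> 2 \<longrightarrow> (\<forall>A\<in>Ob. \<forall>B\<in>Ob. hom A B \<noteq> {} \<longrightarrow>
       (\<exists>C\<in>Ob. \<forall>\<Sigma> :: nat \<Rightarrow> ('a \<Rightarrow> 'a) set.
          ((\<Union>i\<in>{1..k}. \<Sigma> i) = hom A C \<and>
           (\<forall>i\<in>{1..k}. \<forall>j\<in>{1..k}. i \<noteq> j \<longrightarrow> \<Sigma> i \<inter> \<Sigma> j = {}))
          \<longrightarrow> (\<exists>i\<in>{1..k}. \<exists>w\<in>hom B C.
                 (\<lambda>f. compose (carrier A) w f) ` hom A B \<subseteq> \<Sigma> i))))"

end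

theory Submission
  imports Defs "HOL-Library.Countable" "HOL-Library.Ramsey"
begin


definition lcp :: "nat list \<Rightarrow> nat list \<Rightarrow> nat" where
  "lcp xs ys = (LEAST k. xs ! k \<noteq> ys ! k)"

lemma lcp_props:
  assumes "length xs = length ys" "xs \<noteq> ys"
  shows "lcp xs ys < length xs" "xs ! lcp xs ys \<noteq> ys ! lcp xs ys"
        "\<And>i. i < lcp xs ys \<Longrightarrow> xs ! i = ys ! i"
proof -
  obtain k where k: "k < length xs" "xs ! k \<noteq> ys ! k"
    using assms nth_equalityI by metis
  show "xs ! lcp xs ys \<noteq> ys ! lcp xs ys" unfolding lcp_def by (rule LeastI[of _ k]) (use k in auto)
  have "lcp xs ys \<le> k" unfolding lcp_def by (rule Least_le) (use k in auto)
  then show "lcp xs ys < length xs" using k by simp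
  show "\<And>i. i < lcp xs ys \<Longrightarrow> xs ! i = ys ! i" unfolding lcp_def using not_less_Least by blast
qed

lemma lcp_eqI:
  assumes "k < length xs" "\<And>i. i < k \<Longrightarrow> xs ! i = ys ! i" "xs ! k \<noteq> ys ! k"
  shows "lcp xs ys = k"
  unfolding lcp_def
  by (rule Least_equality) (use assms in \<open>auto simp: not_less[symmetric]\<close>)

lemma lcp_sym: "lcp xs ys = lcp ys xs"
  unfolding lcp_def by (metis)

definition UD :: "(nat \<Rightarrow> real) \<Rightarrow> nat list \<Rightarrow> nat list \<Rightarrow> real" where
  "UD u xs ys = (if xs = ys then 0 else u (lcp xs ys))"

definition ULT :: "nat list \<Rightarrow> nat list \<Rightarrow> bool" where
  "ULT xs ys \<longleftrightarrow> xs \<noteq> ys \<and> xs ! lcp xs ys < ys ! lcp xs ys"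

lemma lcp_min:
  assumes "length x = n" "length y = n" "length z = n" "x \<noteq> y" "y \<noteq> z" "x \<noteq> z"
  shows "min (lcp x y) (lcp y z) \<le> lcp x z"
proof (rule ccontr)
  assume "\<not> ?thesis"
  hence a: "lcp x z < lcp x y" "lcp x z < lcp y z" by auto
  have "x ! lcp x z = y ! lcp x z" using lcp_props(3)[of x y] a assms by auto
  also have "\<dots> = z ! lcp x z" using lcp_props(3)[of y z] a assms by auto
  finally show False using lcp_props(2)[of x z] assms by auto
qed

lemma ULT_trans:
  assumes "length x = n" "length y = n" "length z = n" "ULT x y" "ULT y z"
  shows "ULT x z"
proof -
  have ne: "x \<noteq> y" "y \<noteq> z" using assms unfolding ULT_def by auto
  let ?a = "lcp x y" and ?b = "lcp y z"
  have pa: "?a < n" "x ! ?a < y ! ?a" "\<And>i. i < ?a \<Longrightarrow> x ! i = y ! i"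
    using lcp_props[of x y] assms ne unfolding ULT_def by auto
  have pb: "?b < n" "y ! ?b < z ! ?b" "\<And>i. i < ?b \<Longrightarrow> y ! i = z ! i"
    using lcp_props[of y z] assms ne unfolding ULT_def by auto
  have "\<exists>c<n. (\<forall>i<c. x ! i = z ! i) \<and> x ! c < z ! c"
  proof (cases "?a < ?b")
    case True then show ?thesis using pa pb by (intro exI[of _ ?a]) auto
  next
    case False
    show ?thesis
    proof (cases "?a = ?b")
      case True then show ?thesis using pa pb by (intro exI[of _ ?a]) auto
    next
      case False
      then have "?b < ?a" using \<open>\<not> ?a < ?b\<close> by auto
      then show ?thesis using pa pb by (intro exI[of _ ?b]) auto
    qed
  qed
  then obtain c where c: "c < n" "\<forall>i<c. x ! i = z ! i" "x ! c < z ! c" by blast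
  have "lcp x z = c" using c assms by (intro lcp_eqI) auto
  then show ?thesis using c unfolding ULT_def by auto
qed

lemma ULT_total:
  assumes "length x = length y" "x \<noteq> y" shows "ULT x y \<or> ULT y x"
  using lcp_props[OF assms] lcp_sym[of x y] unfolding ULT_def by (auto simp: neq_iff)

lemma ULT_asym: "ULT x y \<Longrightarrow> \<not> ULT y x"
  unfolding ULT_def using lcp_sym[of x y] by auto

lemma ULT_convex:
  assumes "length x = n" "length y = n" "length z = n" "ULT x z" "ULT z y"
  shows "lcp x y \<le> lcp x z"
proof (rule ccontr)
  assume "\<not> ?thesis"
  hence c: "lcp x z < lcp x y" by simp
  have xy: "x \<noteq> y" using ULT_trans[OF assms(1) assms(3) assms(2) assms(4) assms(5)] ULT_def by auto
  have xz: "x \<noteq> z" using assms ULT_def by auto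
  let ?c = "lcp x z"
  have "x ! ?c < z ! ?c" using assms unfolding ULT_def by auto
  have e1: "\<And>i. i < ?c \<Longrightarrow> x ! i = z ! i" using lcp_props(3)[of x z] assms xz by auto
  have e2: "\<And>i. i < lcp x y \<Longrightarrow> x ! i = y ! i" using lcp_props(3)[of x y] assms xy by auto
  have "lcp y z = ?c"
    using c e1 e2 \<open>x ! ?c < z ! ?c\<close> lcp_props(1)[of x z] assms xz
    by (intro lcp_eqI) auto
  then have "ULT y z" unfolding ULT_def using c e2 \<open>x ! ?c < z ! ?c\<close> by auto
  then show False using assms ULT_asym by blast
qed



abbreviation dec :: "nat \<Rightarrow> nat list" where "dec x \<equiv> from_nat x"


definition decr :: "nat \<Rightarrow> (nat \<Rightarrow> real) \<Rightarrow> bool" where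
  "decr n u \<longleftrightarrow> (\<forall>i j. i < j \<longrightarrow> j < n \<longrightarrow> u j < u i) \<and> (\<forall>i<n. 0 < u i)"

lemma decr_mono: "decr n u \<Longrightarrow> i \<le> j \<Longrightarrow> j < n \<Longrightarrow> u j \<le> u i"
  unfolding decr_def by (cases "i = j") (auto intro: less_imp_le)

lemma UD_sym: "UD u x y = UD u y x"
  unfolding UD_def using lcp_sym by auto

lemma UD_pos: "decr n u \<Longrightarrow> length x = n \<Longrightarrow> length y = n \<Longrightarrow> x \<noteq> y \<Longrightarrow> 0 < UD u x y"
  unfolding UD_def decr_def using lcp_props(1)[of x y] by auto

lemma UD_ultra:
  assumes "decr n u" "length x = n" "length y = n" "length z = n"
  shows "UD u x z \<le> max (UD u x y) (UD u y z)"
proof -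
  have nn: "\<And>a b. length a = n \<Longrightarrow> length b = n \<Longrightarrow> 0 \<le> UD u a b"
    using UD_pos[OF assms(1)] by (metis UD_def less_imp_le order_refl)
  show ?thesis
  proof (cases "x = z")
    case True
    then have "UD u x z = 0" by (simp add: UD_def)
    then show ?thesis using nn[of x y] assms by simp
  next
    case xz: False
    show ?thesis
    proof (cases "x = y \<or> y = z")
      case True then show ?thesis using xz by (auto simp: UD_def)
    next
      case False
      then have ne: "x \<noteq> y" "y \<noteq> z" by auto
      have m: "min (lcp x y) (lcp y z) \<le> lcp x z" using lcp_min[of x n y z] assms ne xz by auto
      have "lcp x z < n" using lcp_props(1)[of x z] assms xz by auto
      then have "u (lcp x z) \<le> u (min (lcp x y) (lcp y z))" using decr_mono[OF assms(1) m] by auto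
      then show ?thesis using ne xz unfolding UD_def by (auto simp: min_def split: if_splits)
    qed
  qed
qed

definition Plist :: "nat \<Rightarrow> nat \<Rightarrow> nat list set" where
  "Plist n L = {xs. length xs = n \<and> set xs \<subseteq> {..<L}}"

definition UU :: "nat \<Rightarrow> (nat \<Rightarrow> real) \<Rightarrow> nat \<Rightarrow> nat ous" where
  "UU n u L = \<lparr>carrier = to_nat ` Plist n L,
     dist = (\<lambda>x y. UD u (from_nat x) (from_nat y)),
     less = (\<lambda>x y. ULT (from_nat x) (from_nat y))\<rparr>"

lemma UU_simps: "carrier (UU n u L) = to_nat ` Plist n L"
  "dist (UU n u L) x y = UD u (from_nat x) (from_nat y)"
  "less (UU n u L) x y = ULT (from_nat x) (from_nat y)"
  by (simp_all add: UU_def)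

lemma UU_fcous:
  assumes "decr n u" shows "fcous (UU n u L)"
proof -
  let ?M = "UU n u L"
  have fin: "finite (carrier ?M)"
    unfolding UU_simps Plist_def
    using finite_lists_length_eq[of "{..<L}" n] by (auto simp: conj_commute)
  have len: "\<And>x. x \<in> carrier ?M \<Longrightarrow> length (dec x) = n"
    unfolding UU_simps Plist_def by auto
  have nn: "\<And>a b. length a = n \<Longrightarrow> length b = n \<Longrightarrow> 0 \<le> UD u a b"
    using UD_pos[OF assms(1)] by (metis UD_def less_imp_le order_refl)
  have inj: "\<And>x y. x \<in> carrier ?M \<Longrightarrow> y \<in> carrier ?M \<Longrightarrow> dec x = dec y \<Longrightarrow> x = y"
    unfolding UU_simps by auto
  have um: "ultrametric_on (carrier ?M) (dist ?M)"
    unfolding ultrametric_on_def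
  proof (intro conjI ballI)
    fix x y assume xy: "x \<in> carrier ?M" "y \<in> carrier ?M"
    show "0 \<le> dist ?M x y" using nn len xy by (simp add: UU_simps)
    show "(dist ?M x y = 0) = (x = y)"
      using UD_pos[OF assms, of "from_nat x" "from_nat y"] len[OF xy(1)] len[OF xy(2)] inj[OF xy]
      by (auto simp: UU_simps UD_def)
    show "dist ?M x y = dist ?M y x" by (simp add: UU_simps UD_sym)
  next
    fix x y z assume xyz: "x \<in> carrier ?M" "y \<in> carrier ?M" "z \<in> carrier ?M"
    have u: "dist ?M x z \<le> max (dist ?M x y) (dist ?M y z)"
      using UD_ultra[OF assms len[OF xyz(1)] len[OF xyz(2)] len[OF xyz(3)]] by (simp add: UU_simps)
    then show "dist ?M x z \<le> max (dist ?M x y) (dist ?M y z)" .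
    show "dist ?M x z \<le> dist ?M x y + dist ?M y z"
      using u nn[OF len[OF xyz(1)] len[OF xyz(2)]] nn[OF len[OF xyz(2)] len[OF xyz(3)]]
      by (simp add: UU_simps)
  qed
  have so: "strict_linear_order_on (carrier ?M) (less ?M)"
    unfolding strict_linear_order_on_def UU_simps(3)
  proof (intro conjI ballI impI)
    fix x assume "x \<in> carrier ?M" then show "\<not> ULT (from_nat x) (from_nat x)" by (simp add: ULT_def)
  next
    fix x y z assume "x \<in> carrier ?M" "y \<in> carrier ?M" "z \<in> carrier ?M"
      "ULT (from_nat x) (from_nat y) \<and> ULT (from_nat y) (from_nat z)"
    then show "ULT (from_nat x) (from_nat z)" using ULT_trans len by blast
  next
    fix x y assume "x \<in> carrier ?M" "y \<in> carrier ?M" "x \<noteq> y"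
    then show "ULT (from_nat x) (from_nat y) \<or> ULT (from_nat y) (from_nat x)"
      using ULT_total len inj by metis
  qed
  have cv: "\<forall>c\<in>carrier ?M. \<forall>r::real. convex_in ?M (cball_in ?M c r)"
    unfolding convex_in_def cball_in_def
  proof (intro ballI allI impI, clarify)
    fix c r x y z
    assume c: "c \<in> carrier ?M" and x: "x \<in> carrier ?M" "dist ?M c x \<le> r"
      and y: "y \<in> carrier ?M" "dist ?M c y \<le> r" and z: "z \<in> carrier ?M"
      and o: "less ?M x z" "less ?M z y"
    let ?c = "dec c" and ?x = "dec x" and ?y = "dec y" and ?z = "dec z"
    have l: "length ?c = n" "length ?x = n" "length ?y = n" "length ?z = n" using len c x y z by auto
    have oo: "ULT ?x ?z" "ULT ?z ?y" using o by (auto simp: UU_simps)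
    have xz: "?x \<noteq> ?z" and xy: "?x \<noteq> ?y" using oo ULT_trans[OF l(2) l(4) l(3) oo] by (auto simp: ULT_def)
    have lc: "lcp ?x ?y \<le> lcp ?x ?z" using ULT_convex[OF l(2) l(3) l(4) oo] .
    have "lcp ?x ?z < n" using lcp_props(1)[of ?x ?z] l xz by auto
    then have "UD u ?x ?z \<le> UD u ?x ?y" using decr_mono[OF assms lc] xz xy by (simp add: UD_def)
    also have "\<dots> \<le> max (UD u ?x ?c) (UD u ?c ?y)" using UD_ultra[OF assms l(2) l(1) l(3)] .
    also have "\<dots> \<le> r" using x y by (simp add: UU_simps UD_sym)
    finally have "UD u ?x ?z \<le> r" .
    then have "UD u ?c ?z \<le> r"
      using UD_ultra[OF assms l(1) l(2) l(4)] x by (simp add: UU_simps UD_sym)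
    then show "dist ?M c z \<le> r" by (simp add: UU_simps)
  qed
  show ?thesis unfolding fcous_def using fin um so cv by blast
qed

lemma UU_spec: "spec (UU n u L) \<subseteq> insert 0 (u ` {..<n})"
proof
  fix d assume "d \<in> spec (UU n u L)"
  then obtain x y where xy: "x \<in> carrier (UU n u L)" "y \<in> carrier (UU n u L)"
    "d = UD u (from_nat x) (from_nat y)" unfolding spec_def by (auto simp: UU_simps)
  have "length (dec x) = n" "length (dec y) = n" using xy by (auto simp: UU_simps Plist_def)
  then show "d \<in> insert 0 (u ` {..<n})"
    using xy lcp_props(1)[of "from_nat x" "from_nat y"] by (auto simp: UD_def)
qed



definition good :: "'a ous \<Rightarrow> nat \<Rightarrow> (nat \<Rightarrow> real) \<Rightarrow> nat \<Rightarrow> ('a \<Rightarrow> nat list) \<Rightarrow> bool" where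
  "good M n u L c \<longleftrightarrow> (\<forall>x\<in>carrier M. c x \<in> Plist n L) \<and>
     (\<forall>x\<in>carrier M. \<forall>y\<in>carrier M. UD u (c x) (c y) = dist M x y \<and> (less M x y \<longleftrightarrow> ULT (c x) (c y)))"

definition emb :: "'a ous \<Rightarrow> ('a \<Rightarrow> nat list) \<Rightarrow> 'a \<Rightarrow> nat" where
  "emb M c = (\<lambda>x. if x \<in> carrier M then to_nat (c x) else undefined)"

lemma good_hom:
  assumes "fcous M" "good M n u L c"
  shows "emb M c \<in> hom M (UU n u L)"
proof -
  have um: "ultrametric_on (carrier M) (dist M)" using assms(1) by (simp add: fcous_def)
  have "inj_on (emb M c) (carrier M)"
  proof (rule inj_onI)
    fix x y assume xy: "x \<in> carrier M" "y \<in> carrier M" "emb M c x = emb M c y"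
    then have "c x = c y" by (simp add: emb_def)
    then have "dist M x y = 0" using assms(2) xy unfolding good_def by (metis UD_def)
    then show "x = y" using um xy unfolding ultrametric_on_def by blast
  qed
  then show ?thesis using assms(2)
    unfolding hom_def good_def by (auto simp: emb_def UU_simps PiE_def extensional_def)
qed

lemma lcp_map:
  assumes "length x = length y" "x \<noteq> y" "inj_on \<phi> (set x \<union> set y)"
  shows "lcp (map \<phi> x) (map \<phi> y) = lcp x y" "map \<phi> x \<noteq> map \<phi> y"
proof -
  have p: "lcp x y < length x" "x ! lcp x y \<noteq> y ! lcp x y" "\<And>i. i < lcp x y \<Longrightarrow> x ! i = y ! i"
    using lcp_props[OF assms(1,2)] by auto
  have "\<phi> (x ! lcp x y) \<noteq> \<phi> (y ! lcp x y)"
    using p(1,2) assms(1,3) by (metis UnCI inj_on_contraD nth_mem)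
  then show "lcp (map \<phi> x) (map \<phi> y) = lcp x y" using p assms(1) by (intro lcp_eqI) auto
  show "map \<phi> x \<noteq> map \<phi> y" using \<open>\<phi> (x ! lcp x y) \<noteq> \<phi> (y ! lcp x y)\<close> p assms(1) by (metis nth_map)
qed

lemma good_map:
  assumes "good M n u L c" "strict_mono_on \<Lambda> \<phi>" "\<And>x. x \<in> carrier M \<Longrightarrow> set (c x) \<subseteq> \<Lambda>"
    "\<phi> ` \<Lambda> \<subseteq> {..<L'}"
  shows "good M n u L' (\<lambda>x. map \<phi> (c x))"
  unfolding good_def
proof (intro conjI ballI)
  fix x assume x: "x \<in> carrier M"
  show "map \<phi> (c x) \<in> Plist n L'" using assms(1,3,4) x unfolding good_def Plist_def by auto
next
  fix x y assume x: "x \<in> carrier M" and y: "y \<in> carrier M"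
  have inj: "inj_on \<phi> (set (c x) \<union> set (c y))"
    using assms(2,3) x y strict_mono_on_imp_inj_on inj_on_subset by (metis Un_subset_iff)
  have len: "length (c x) = length (c y)" using assms(1) x y by (auto simp: good_def Plist_def)
  have g: "UD u (c x) (c y) = dist M x y" "less M x y \<longleftrightarrow> ULT (c x) (c y)"
    using assms(1) x y unfolding good_def by auto
  show "UD u (map \<phi> (c x)) (map \<phi> (c y)) = dist M x y"
  proof (cases "c x = c y")
    case True then show ?thesis using g by (simp add: UD_def)
  next
    case False then show ?thesis using g lcp_map[OF len False inj] by (simp add: UD_def)
  qed
  show "less M x y \<longleftrightarrow> ULT (map \<phi> (c x)) (map \<phi> (c y))"
  proof (cases "c x = c y")
    case True then show ?thesis using g by (simp add: ULT_def)
  next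
    case False
    note l = lcp_map[OF len False inj]
    have p: "lcp (c x) (c y) < length (c x)" using lcp_props(1)[OF len False] .
    have s: "c x ! lcp (c x) (c y) \<in> \<Lambda>" "c y ! lcp (c x) (c y) \<in> \<Lambda>"
      using assms(3) x y p len by (metis nth_mem subsetD)+
    have "(c x ! lcp (c x) (c y) < c y ! lcp (c x) (c y)) \<longleftrightarrow>
          (\<phi> (c x ! lcp (c x) (c y)) < \<phi> (c y ! lcp (c x) (c y)))"
      using assms(2) s by (metis strict_mono_on_less)
    then show ?thesis using g l False p len by (simp add: ULT_def)
  qed
qed



definition pos :: "'a ous \<Rightarrow> 'a \<Rightarrow> nat" where
  "pos M x = card {y \<in> carrier M. less M y x}"

definition cls :: "'a ous \<Rightarrow> (nat \<Rightarrow> real) \<Rightarrow> 'a \<Rightarrow> nat \<Rightarrow> 'a set" where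
  "cls M u x s = {y \<in> carrier M. dist M x y < u s}"

definition Fi :: "'a ous \<Rightarrow> (nat \<Rightarrow> real) \<Rightarrow> 'a \<Rightarrow> nat \<Rightarrow> nat" where
  "Fi M u x s = Min (pos M ` cls M u x s)"

definition can :: "'a ous \<Rightarrow> nat \<Rightarrow> (nat \<Rightarrow> real) \<Rightarrow> 'a \<Rightarrow> nat list" where
  "can M n u x = map (\<lambda>s. Fi M u x s * n + s) [0..<n]"

definition spec_ok :: "'a ous \<Rightarrow> nat \<Rightarrow> (nat \<Rightarrow> real) \<Rightarrow> bool" where
  "spec_ok M n u \<longleftrightarrow> (\<forall>x\<in>carrier M. \<forall>y\<in>carrier M. x \<noteq> y \<longrightarrow> (\<exists>j<n. dist M x y = u j))"

lemma arith1: "F < F' \<Longrightarrow> s < (n::nat) \<Longrightarrow> F*n+s < F'*n+s'"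
proof -
  assume a: "F < F'" "s < n"
  have "F*n+s < (F+1)*n" using a by simp
  also have "\<dots> \<le> F'*n" using a by (intro mult_le_mono1) simp
  finally show ?thesis by simp
qed

lemma arith2: "F*n+s < F'*n+s' \<Longrightarrow> s' < (n::nat) \<Longrightarrow> F \<le> F'"
  using arith1[of F' F s' n s] by (metis less_asym not_le)

context
  fixes M :: "'a ous"
  assumes M: "fcous M"
begin

lemma M_fin: "finite (carrier M)" using M by (simp add: fcous_def)
lemma M_um: "ultrametric_on (carrier M) (dist M)" using M by (simp add: fcous_def)
lemma M_so: "strict_linear_order_on (carrier M) (less M)" using M by (simp add: fcous_def)

lemma d0: "x \<in> carrier M \<Longrightarrow> dist M x x = 0" using M_um by (simp add: ultrametric_on_def)
lemma dsym: "x \<in> carrier M \<Longrightarrow> y \<in> carrier M \<Longrightarrow> dist M x y = dist M y x"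
  using M_um by (simp add: ultrametric_on_def)
lemma dultra: "x \<in> carrier M \<Longrightarrow> y \<in> carrier M \<Longrightarrow> z \<in> carrier M \<Longrightarrow> dist M x z \<le> max (dist M x y) (dist M y z)"
  using M_um by (simp add: ultrametric_on_def)
lemma dzero: "x \<in> carrier M \<Longrightarrow> y \<in> carrier M \<Longrightarrow> dist M x y = 0 \<longleftrightarrow> x = y"
  using M_um by (simp add: ultrametric_on_def)

lemma lirr: "x \<in> carrier M \<Longrightarrow> \<not> less M x x" using M_so by (simp add: strict_linear_order_on_def)
lemma ltrans: "x \<in> carrier M \<Longrightarrow> y \<in> carrier M \<Longrightarrow> z \<in> carrier M \<Longrightarrow> less M x y \<Longrightarrow> less M y z \<Longrightarrow> less M x z"
  using M_so unfolding strict_linear_order_on_def by blast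
lemma ltot: "x \<in> carrier M \<Longrightarrow> y \<in> carrier M \<Longrightarrow> x \<noteq> y \<Longrightarrow> less M x y \<or> less M y x"
  using M_so unfolding strict_linear_order_on_def by blast
lemma lasym: "x \<in> carrier M \<Longrightarrow> y \<in> carrier M \<Longrightarrow> less M x y \<Longrightarrow> \<not> less M y x"
  using lirr ltrans by blast

lemma pos_less: assumes "x \<in> carrier M" "y \<in> carrier M" "less M x y" shows "pos M x < pos M y"
proof -
  have "{z \<in> carrier M. less M z x} \<subset> {z \<in> carrier M. less M z y}"
    using assms ltrans lirr by blast
  then show ?thesis unfolding pos_def using M_fin by (intro psubset_card_mono) auto
qed

lemma pos_less_iff: "x \<in> carrier M \<Longrightarrow> y \<in> carrier M \<Longrightarrow> pos M x < pos M y \<longleftrightarrow> less M x y"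
  using pos_less ltot by (metis less_asym less_irrefl)

lemma pos_inj: "x \<in> carrier M \<Longrightarrow> y \<in> carrier M \<Longrightarrow> pos M x = pos M y \<Longrightarrow> x = y"
  using pos_less ltot by (metis less_irrefl)

lemma pos_bound: "x \<in> carrier M \<Longrightarrow> pos M x < card (carrier M)"
  unfolding pos_def using M_fin lirr by (intro psubset_card_mono) auto

lemma convex_lemma:
  assumes "x \<in> carrier M" "y \<in> carrier M" "z \<in> carrier M" "less M y x" "less M x z" "dist M z y < t"
  shows "dist M z x < t"
proof -
  let ?D = "{dist M z w | w. w \<in> carrier M \<and> dist M z w < t}"
  have fD: "finite ?D" using M_fin by auto
  have yD: "dist M z y \<in> ?D" using assms by auto
  define \<rho> where "\<rho> = Max ?D"
  have "\<rho> \<in> ?D" unfolding \<rho>_def using fD yD Max_in by blast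
  then have rt: "\<rho> < t" by auto
  have yr: "dist M z y \<le> \<rho>" unfolding \<rho>_def using fD yD by simp
  have "0 \<le> dist M z y" using M_um assms unfolding ultrametric_on_def by blast
  then have zr: "dist M z z \<le> \<rho>" using d0 assms yr by simp
  have cv: "convex_in M (cball_in M z \<rho>)" using M assms by (simp add: fcous_def)
  have "x \<in> cball_in M z \<rho>"
    using cv assms yr zr unfolding convex_in_def cball_in_def by blast
  then show ?thesis using rt unfolding cball_in_def by auto
qed

context
  fixes n u assumes dec: "decr n u"
begin

lemma cls_in: "x \<in> carrier M \<Longrightarrow> s < n \<Longrightarrow> x \<in> cls M u x s"
  using d0 dec unfolding cls_def decr_def by auto

lemma Fi_in: assumes "x \<in> carrier M" "s < n"
  shows "\<exists>a\<in>cls M u x s. pos M a = Fi M u x s"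
proof -
  have "Fi M u x s \<in> pos M ` cls M u x s"
    unfolding Fi_def using cls_in[OF assms] M_fin by (intro Min_in) (auto simp: cls_def)
  then show ?thesis by auto
qed

lemma Fi_le: "x \<in> carrier M \<Longrightarrow> s < n \<Longrightarrow> Fi M u x s \<le> pos M x"
  unfolding Fi_def using cls_in M_fin by (intro Min_le) (auto simp: cls_def)

lemma cls_eq: assumes "x \<in> carrier M" "y \<in> carrier M" "dist M x y < u s"
  shows "cls M u x s = cls M u y s"
  unfolding cls_def using assms dultra dsym by (auto, (smt (verit))+)

lemma Fi_cong: "x \<in> carrier M \<Longrightarrow> y \<in> carrier M \<Longrightarrow> dist M x y < u s \<Longrightarrow> Fi M u x s = Fi M u y s"
  unfolding Fi_def using cls_eq by simp

lemma Fi_mono: assumes "x \<in> carrier M" "s \<le> s'" "s' < n" shows "Fi M u x s \<le> Fi M u x s'"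
proof -
  have "u s' \<le> u s" using decr_mono[OF dec assms(2,3)] .
  then have sub: "cls M u x s' \<subseteq> cls M u x s" unfolding cls_def by auto
  show ?thesis unfolding Fi_def using cls_in[OF assms(1,3)] sub M_fin
    by (intro Min_antimono) (auto simp: cls_def)
qed

lemma Fi_gt: assumes "x \<in> carrier M" "y \<in> carrier M" "less M x y" "\<not> dist M y x < u s" "s < n"
  shows "pos M x < Fi M u y s"
proof -
  obtain a where a: "a \<in> cls M u y s" "pos M a = Fi M u y s" using Fi_in[OF assms(2,5)] by blast
  have ac: "a \<in> carrier M" "dist M y a < u s" using a by (auto simp: cls_def)
  show ?thesis
  proof (rule ccontr)
    assume "\<not> ?thesis"
    then have "pos M a \<le> pos M x" using a by simp
    moreover have "a \<noteq> x" using ac assms by auto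
    ultimately have "pos M a < pos M x" using pos_inj ac assms by (metis le_neq_implies_less)
    then have "less M a x" using pos_less_iff ac assms by blast
    then have "dist M y x < u s" using convex_lemma[OF assms(1) ac(1) assms(2) _ assms(3) ac(2)] by blast
    then show False using assms by simp
  qed
qed

lemma can_nth: "i < n \<Longrightarrow> can M n u x ! i = Fi M u x i * n + i"
  unfolding can_def by simp

lemma can_good:
  assumes sp: "spec_ok M n u"
  shows "good M n u (card (carrier M) * n) (can M n u)"
  unfolding good_def
proof (rule conjI; intro ballI)
  fix x assume x: "x \<in> carrier M"
  have "\<And>s. s < n \<Longrightarrow> Fi M u x s * n + s < card (carrier M) * n"
  proof -
    fix s assume s: "s < n"
    have "Fi M u x s < card (carrier M)" using Fi_le[OF x s] pos_bound[OF x] by simp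
    then show "Fi M u x s * n + s < card (carrier M) * n" using arith1[of _ _ s n 0] s by simp
  qed
  then show "can M n u x \<in> Plist n (card (carrier M) * n)"
    unfolding Plist_def can_def by auto
next
  fix x y assume x: "x \<in> carrier M" and y: "y \<in> carrier M"
  show "UD u (can M n u x) (can M n u y) = dist M x y \<and> (less M x y \<longleftrightarrow> ULT (can M n u x) (can M n u y))"
  proof (cases "x = y")
    case True then show ?thesis using d0 x lirr by (simp add: UD_def ULT_def)
  next
    case False
    obtain j where j: "j < n" "dist M x y = u j" using sp x y False unfolding spec_ok_def by blast
    have eq: "\<And>i. i < j \<Longrightarrow> can M n u x ! i = can M n u y ! i"
    proof -
      fix i assume i: "i < j"
      have "u j < u i" using dec i j unfolding decr_def by auto
      then show "can M n u x ! i = can M n u y ! i" using Fi_cong[OF x y] j i by (simp add: can_nth)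
    qed
    have lt: "less M x y \<Longrightarrow> can M n u x ! j < can M n u y ! j"
      using Fi_le[OF x j(1)] Fi_gt[OF x y _ _ j(1)] j dsym[OF x y] by (simp add: can_nth)
    have gt: "less M y x \<Longrightarrow> can M n u y ! j < can M n u x ! j"
      using Fi_le[OF y j(1)] Fi_gt[OF y x _ _ j(1)] j dsym[OF x y] by (simp add: can_nth)
    have ne: "can M n u x ! j \<noteq> can M n u y ! j" using lt gt ltot[OF x y False] by fastforce
    have l: "lcp (can M n u x) (can M n u y) = j"
      using eq ne j by (intro lcp_eqI) (auto simp: can_def)
    have cne: "can M n u x \<noteq> can M n u y" using ne by auto
    show ?thesis using l cne j lt gt lasym[OF x y] ltot[OF x y False]
      by (auto simp: UD_def ULT_def)
  qed
qed

end
end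



definition lab :: "'a ous \<Rightarrow> nat \<Rightarrow> (nat \<Rightarrow> real) \<Rightarrow> nat set" where
  "lab A n u = (\<Union>a\<in>carrier A. set (can A n u a))"

definition pt :: "'a ous \<Rightarrow> nat \<Rightarrow> 'a" where
  "pt A F = (THE a. a \<in> carrier A \<and> pos A a = F)"

definition bet :: "'a ous \<Rightarrow> 'b ous \<Rightarrow> nat \<Rightarrow> (nat \<Rightarrow> real) \<Rightarrow> ('a \<Rightarrow> 'b) \<Rightarrow> nat \<Rightarrow> nat" where
  "bet A B n u g l = Fi B u (g (pt A (l div n))) (l mod n) * n + l mod n"

lemma hom_props:
  assumes "g \<in> hom A B" "x \<in> carrier A" "y \<in> carrier A"
  shows "g x \<in> carrier B" "dist B (g x) (g y) = dist A x y" "less B (g x) (g y) \<longleftrightarrow> less A x y"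
  using assms unfolding hom_def by auto

context
  fixes A :: "'a ous" and B :: "'b ous" and n u g
  assumes A: "fcous A" and B: "fcous B" and dec: "decr n u" and g: "g \<in> hom A B"
begin

lemma pt_props:
  assumes a: "a \<in> carrier A" and s: "s < n"
  shows "pt A (Fi A u a s) \<in> cls A u a s" "pos A (pt A (Fi A u a s)) = Fi A u a s"
proof -
  obtain a' where a': "a' \<in> cls A u a s" "pos A a' = Fi A u a s" using Fi_in[OF A dec a s] by blast
  have ac: "a' \<in> carrier A" using a' by (simp add: cls_def)
  have "pt A (Fi A u a s) = a'" unfolding pt_def
    using a' ac pos_inj[OF A] by (intro the_equality) auto
  then show "pt A (Fi A u a s) \<in> cls A u a s" "pos A (pt A (Fi A u a s)) = Fi A u a s" using a' by auto
qed

lemma bet_can: assumes a: "a \<in> carrier A" shows "can B n u (g a) = map (bet A B n u g) (can A n u a)"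
proof (rule nth_equalityI)
  show "length (can B n u (g a)) = length (map (bet A B n u g) (can A n u a))" by (simp add: can_def)
next
  fix s assume "s < length (can B n u (g a))"
  then have s: "s < n" by (simp add: can_def)
  let ?p = "pt A (Fi A u a s)"
  have p: "?p \<in> carrier A" "dist A a ?p < u s" using pt_props[OF a s] by (auto simp: cls_def)
  have dv: "(Fi A u a s * n + s) div n = Fi A u a s" "(Fi A u a s * n + s) mod n = s" using s by auto
  have "Fi B u (g a) s = Fi B u (g ?p) s"
    using Fi_cong[OF B dec hom_props(1)[OF g a a] hom_props(1)[OF g p(1) p(1)]] hom_props(2)[OF g a p(1)] p by simp
  then show "can B n u (g a) ! s = map (bet A B n u g) (can A n u a) ! s"
    using s dv by (simp add: can_nth[OF B dec] can_nth[OF A dec] bet_def can_def)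
qed

lemma bet_mono: "strict_mono_on (lab A n u) (bet A B n u g)"
proof (rule strict_mono_onI)
  fix l1 l2 assume l1: "l1 \<in> lab A n u" and l2: "l2 \<in> lab A n u" and lt: "l1 < l2"
  obtain a1 s1 where a1: "a1 \<in> carrier A" "s1 < n" "l1 = Fi A u a1 s1 * n + s1"
    using l1 unfolding lab_def can_def by auto
  obtain a2 s2 where a2: "a2 \<in> carrier A" "s2 < n" "l2 = Fi A u a2 s2 * n + s2"
    using l2 unfolding lab_def can_def by auto
  define F1 where "F1 = Fi A u a1 s1"
  define F2 where "F2 = Fi A u a2 s2"
  define p1 where "p1 = pt A F1"
  define p2 where "p2 = pt A F2"
  have p1: "p1 \<in> carrier A" "dist A a1 p1 < u s1" "pos A p1 = F1"
    using pt_props[OF a1(1,2)] unfolding p1_def F1_def by (auto simp: cls_def)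
  have p2: "p2 \<in> carrier A" "dist A a2 p2 < u s2" "pos A p2 = F2"
    using pt_props[OF a2(1,2)] unfolding p2_def F2_def by (auto simp: cls_def)
  have dv: "l1 div n = F1" "l1 mod n = s1" "l2 div n = F2" "l2 mod n = s2"
    using a1 a2 unfolding F1_def F2_def by auto
  have b1: "bet A B n u g l1 = Fi B u (g p1) s1 * n + s1" using dv unfolding bet_def p1_def by simp
  have b2: "bet A B n u g l2 = Fi B u (g p2) s2 * n + s2" using dv unfolding bet_def p2_def by simp
  have FF: "F1 \<le> F2" using arith2[of F1 n s1 F2 s2] lt a1 a2 unfolding F1_def F2_def by simp
  have Fp2: "Fi A u p2 s2 = F2" using Fi_cong[OF A dec a2(1) p2(1) p2(2)] unfolding F2_def by simp
  show "bet A B n u g l1 < bet A B n u g l2"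
  proof (cases "F1 = F2")
    case True
    then have "p1 = p2" unfolding p1_def p2_def by simp
    have "s1 < s2" using lt a1 a2 True unfolding F1_def F2_def by simp
    then have "Fi B u (g p1) s1 \<le> Fi B u (g p2) s2"
      using Fi_mono[OF B dec hom_props(1)[OF g p1(1) p1(1)] less_imp_le[OF \<open>s1 < s2\<close>] a2(2)] \<open>p1 = p2\<close> by simp
    then have "Fi B u (g p1) s1 * n \<le> Fi B u (g p2) s2 * n" by (rule mult_le_mono1)
    then show ?thesis using b1 b2 \<open>s1 < s2\<close> by linarith
  next
    case False
    then have lt12: "F1 < F2" using FF by simp
    then have lp: "less A p1 p2" using pos_less_iff[OF A p1(1) p2(1)] p1 p2 by simp
    have nd: "\<not> dist A p2 p1 < u s2"
    proof
      assume "dist A p2 p1 < u s2"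
      then have "Fi A u p2 s2 = Fi A u p1 s2" using Fi_cong[OF A dec p2(1) p1(1)] by simp
      also have "\<dots> \<le> pos A p1" using Fi_le[OF A dec p1(1) a2(2)] .
      finally show False using Fp2 p1(3) lt12 by simp
    qed
    have "pos B (g p1) < Fi B u (g p2) s2"
      using Fi_gt[OF B dec hom_props(1)[OF g p1(1) p1(1)] hom_props(1)[OF g p2(1) p2(1)]] lp nd
        hom_props(2,3)[OF g p2(1) p1(1)] hom_props(3)[OF g p1(1) p2(1)] a2(2) by simp
    moreover have "Fi B u (g p1) s1 \<le> pos B (g p1)" using Fi_le[OF B dec hom_props(1)[OF g p1(1) p1(1)] a1(2)] .
    ultimately show ?thesis using b1 b2 arith1 a1(2) by simp
  qed
qed

end



lemma sl_nth_card:
  fixes X :: "nat set"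
  assumes "finite X" "y \<in> X"
  shows "sorted_list_of_set X ! card {x\<in>X. x < y} = y"
proof -
  define xs where "xs = sorted_list_of_set X"
  have ss: "sorted_wrt (<) xs" unfolding xs_def by (rule strict_sorted_list_of_set)
  have st: "set xs = X" unfolding xs_def using assms by simp
  have dx: "distinct xs" unfolding xs_def by simp
  obtain i where i: "i < length xs" "xs ! i = y" using assms st by (metis in_set_conv_nth)
  have "{x\<in>X. x < y} = (\<lambda>j. xs ! j) ` {..<i}"
  proof
    show "{x \<in> X. x < y} \<subseteq> (!) xs ` {..<i}"
    proof
      fix x assume "x \<in> {x \<in> X. x < y}"
      then obtain j where j: "j < length xs" "xs ! j = x" "x < y" using st by (auto simp: in_set_conv_nth)
      have "j < i"
      proof (rule ccontr)
        assume "\<not> j < i"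
        then have "i \<le> j" by simp
        then have "xs ! i \<le> xs ! j" using ss j i
          by (metis le_neq_implies_less order.strict_implies_order order_refl sorted_wrt_nth_less)
        then show False using i j by simp
      qed
      then show "x \<in> (!) xs ` {..<i}" using j by auto
    qed
    show "(!) xs ` {..<i} \<subseteq> {x \<in> X. x < y}"
      using ss i st by (auto intro: sorted_wrt_nth_less)
  qed
  moreover have "inj_on (\<lambda>j. xs ! j) {..<i}" using dx i by (auto simp: inj_on_def nth_eq_iff_index_eq)
  ultimately have "card {x\<in>X. x < y} = i" by (simp add: card_image)
  then show ?thesis using i unfolding xs_def by simp
qed

lemma card_less_mono:
  fixes \<Lambda> :: "nat set" and \<gamma> :: "nat \<Rightarrow> nat"
  assumes "finite \<Lambda>" "strict_mono_on \<Lambda> \<gamma>" "l \<in> \<Lambda>"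
  shows "card {x \<in> \<gamma> ` \<Lambda>. x < \<gamma> l} = card {l'\<in>\<Lambda>. l' < l}"
proof -
  have "{x \<in> \<gamma> ` \<Lambda>. x < \<gamma> l} = \<gamma> ` {l'\<in>\<Lambda>. l' < l}"
  proof
    show "{x \<in> \<gamma> ` \<Lambda>. x < \<gamma> l} \<subseteq> \<gamma> ` {l' \<in> \<Lambda>. l' < l}"
    proof
      fix x assume "x \<in> {x \<in> \<gamma> ` \<Lambda>. x < \<gamma> l}"
      then obtain a where a: "a \<in> \<Lambda>" "x = \<gamma> a" "\<gamma> a < \<gamma> l" by auto
      then have "a < l" using strict_mono_on_less[OF assms(2) a(1) assms(3)] by simp
      then show "x \<in> \<gamma> ` {l' \<in> \<Lambda>. l' < l}" using a by auto
    qed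
    show "\<gamma> ` {l' \<in> \<Lambda>. l' < l} \<subseteq> {x \<in> \<gamma> ` \<Lambda>. x < \<gamma> l}"
    proof
      fix x assume "x \<in> \<gamma> ` {l' \<in> \<Lambda>. l' < l}"
      then obtain a where a: "a \<in> \<Lambda>" "x = \<gamma> a" "a < l" by auto
      then have "\<gamma> a < \<gamma> l" using strict_mono_on_less[OF assms(2) a(1) assms(3)] by simp
      then show "x \<in> {x \<in> \<gamma> ` \<Lambda>. x < \<gamma> l}" using a by auto
    qed
  qed
  moreover have "inj_on \<gamma> {l'\<in>\<Lambda>. l' < l}"
    by (rule inj_on_subset[OF strict_mono_on_imp_inj_on[OF assms(2)]]) auto
  ultimately show ?thesis by (simp add: card_image)
qed

definition psi :: "nat set \<Rightarrow> nat set \<Rightarrow> nat \<Rightarrow> nat" where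
  "psi \<Lambda> X l = sorted_list_of_set X ! card {l'\<in>\<Lambda>. l' < l}"

lemma psi_eq:
  fixes \<Lambda> :: "nat set" and \<gamma> :: "nat \<Rightarrow> nat"
  assumes "finite \<Lambda>" "strict_mono_on \<Lambda> \<gamma>" "l \<in> \<Lambda>"
  shows "psi \<Lambda> (\<gamma> ` \<Lambda>) l = \<gamma> l"
proof -
  have f: "finite (\<gamma> ` \<Lambda>)" "\<gamma> l \<in> \<gamma> ` \<Lambda>" using assms by auto
  have "psi \<Lambda> (\<gamma> ` \<Lambda>) l = sorted_list_of_set (\<gamma> ` \<Lambda>) ! card {x \<in> \<gamma> ` \<Lambda>. x < \<gamma> l}"
    unfolding psi_def card_less_mono[OF assms] ..
  also have "\<dots> = \<gamma> l" by (rule sl_nth_card[OF f])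
  finally show ?thesis .
qed

lemma enum_props:
  fixes H :: "nat set"
  assumes "finite H" "card H = m"
  shows "strict_mono_on {..<m} (\<lambda>i. sorted_list_of_set H ! i)" "(\<lambda>i. sorted_list_of_set H ! i) ` {..<m} \<subseteq> H"
proof -
  have ss: "sorted_wrt (<) (sorted_list_of_set H)" by (rule strict_sorted_list_of_set)
  have l: "length (sorted_list_of_set H) = m" using assms by simp
  show "strict_mono_on {..<m} (\<lambda>i. sorted_list_of_set H ! i)"
  proof (rule strict_mono_onI)
    fix r s assume "r \<in> {..<m}" "s \<in> {..<m}" "r < s"
    then show "sorted_list_of_set H ! r < sorted_list_of_set H ! s"
      using sorted_wrt_nth_less[OF ss, of r s] l by simp
  qed
  show "(\<lambda>i. sorted_list_of_set H ! i) ` {..<m} \<subseteq> H"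
  proof
    fix x assume "x \<in> (\<lambda>i. sorted_list_of_set H ! i) ` {..<m}"
    then obtain i where i: "i < m" "x = sorted_list_of_set H ! i" by auto
    then have "x \<in> set (sorted_list_of_set H)" using l nth_mem by metis
    then show "x \<in> H" using assms(1) by simp
  qed
qed



lemma set_nth_image: "set ys = (\<lambda>i. ys ! i) ` {..<length ys}"
  by (auto simp: in_set_conv_nth)

lemma lab_finite: "fcous A \<Longrightarrow> finite (lab A n u)"
  unfolding lab_def fcous_def by auto

lemma spec_finite: "fcous M \<Longrightarrow> finite (spec M)"
proof -
  assume "fcous M"
  then have "finite (carrier M \<times> carrier M)" by (simp add: fcous_def)
  moreover have "spec M = (\<lambda>(x,y). dist M x y) ` (carrier M \<times> carrier M)" unfolding spec_def by auto
  ultimately show ?thesis by simp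
qed

lemma spec_nonneg: "fcous M \<Longrightarrow> d \<in> spec M \<Longrightarrow> 0 \<le> d"
  unfolding spec_def fcous_def ultrametric_on_def by auto

lemma main_ramsey: "ramsey_property {M :: nat ous. fcous M \<and> spec M \<subseteq> S}"
  unfolding ramsey_property_def
proof (intro allI impI ballI)
  fix k :: nat and A B :: "nat ous"
  assume k: "2 \<le> k" and A: "A \<in> {M. fcous M \<and> spec M \<subseteq> S}" and B: "B \<in> {M. fcous M \<and> spec M \<subseteq> S}"
    and hAB: "hom A B \<noteq> {}"
  have fA: "fcous A" "spec A \<subseteq> S" and fB: "fcous B" "spec B \<subseteq> S" using A B by auto
  let ?Ob = "{M :: nat ous. fcous M \<and> spec M \<subseteq> S}"
  show "\<exists>C\<in>?Ob. \<forall>\<Sigma>. (\<Union> (\<Sigma> ` {1..k}) = hom A C \<and> (\<forall>i\<in>{1..k}. \<forall>j\<in>{1..k}. i \<noteq> j \<longrightarrow> \<Sigma> i \<inter> \<Sigma> j = {})) \<longrightarrow>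
          (\<exists>i\<in>{1..k}. \<exists>w\<in>hom B C. (\<lambda>f. compose (carrier A) w f) ` hom A B \<subseteq> \<Sigma> i)"
  proof (cases "carrier B = {}")
    case True
    obtain f0 where f0: "f0 \<in> hom A B" using hAB by auto
    have cA: "carrier A = {}" using f0 True unfolding hom_def by (auto simp: PiE_def Pi_def split: if_splits)
    have hAB1: "hom A B = {\<lambda>x. undefined}" using cA True unfolding hom_def by (auto simp: PiE_def extensional_def)
    have hBB: "(\<lambda>x. undefined) \<in> hom B B" using True unfolding hom_def by (auto simp: PiE_def extensional_def)
    show ?thesis
    proof (intro bexI[of _ B] allI impI)
      fix \<Sigma> :: "nat \<Rightarrow> (nat \<Rightarrow> nat) set"
      assume "\<Union> (\<Sigma> ` {1..k}) = hom A B \<and> (\<forall>i\<in>{1..k}. \<forall>j\<in>{1..k}. i \<noteq> j \<longrightarrow> \<Sigma> i \<inter> \<Sigma> j = {})"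
      then have "(\<lambda>x. undefined) \<in> \<Union> (\<Sigma> ` {1..k})" using hAB1 by auto
      then obtain i where i: "i \<in> {1..k}" "(\<lambda>x. undefined) \<in> \<Sigma> i" by blast
      show "\<exists>i\<in>{1..k}. \<exists>w\<in>hom B B. (\<lambda>f. compose (carrier A) w f) ` hom A B \<subseteq> \<Sigma> i"
        using i hBB hAB1 cA by (intro bexI[of _ i] bexI[of _ "\<lambda>x. undefined"]) (auto simp: compose_def)
    qed (use B in auto)
  next
    case Bne: False
    define T where "T = (spec A \<union> spec B) - {0}"
    have fT: "finite T" unfolding T_def using spec_finite fA fB by auto
    define n where "n = card T"
    define u where "u = (\<lambda>s. rev (sorted_list_of_set T) ! s)"
    have lenT: "length (rev (sorted_list_of_set T)) = n" unfolding n_def using fT by simp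
    have setT: "set (rev (sorted_list_of_set T)) = T" using fT by simp
    have uT: "u ` {..<n} = T"
    proof -
      have "u ` {..<n} = set (rev (sorted_list_of_set T))"
        unfolding u_def using lenT set_nth_image[of "rev (sorted_list_of_set T)"] by simp
      then show ?thesis using setT by simp
    qed
    have dec: "decr n u"
    proof -
      have sw: "sorted_wrt (>) (rev (sorted_list_of_set T))"
        using strict_sorted_list_of_set[of T] by (simp add: sorted_wrt_rev)
      have "\<And>i j. i < j \<Longrightarrow> j < n \<Longrightarrow> u j < u i"
        unfolding u_def using sorted_wrt_nth_less[OF sw] lenT by simp
      moreover have "\<And>i. i < n \<Longrightarrow> 0 < u i"
      proof -
        fix i assume "i < n"
        then have "u i \<in> T" using uT by auto
        then have "u i \<in> spec A \<or> u i \<in> spec B" "u i \<noteq> 0" unfolding T_def by auto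
        then have "0 \<le> u i" "u i \<noteq> 0" using spec_nonneg[OF fA(1)] spec_nonneg[OF fB(1)] by blast+
        then show "0 < u i" by simp
      qed
      ultimately show ?thesis unfolding decr_def by blast
    qed
    have spok: "\<And>M::nat ous. fcous M \<Longrightarrow> spec M \<subseteq> spec A \<union> spec B \<Longrightarrow> spec_ok M n u"
      unfolding spec_ok_def
    proof (intro ballI impI)
      fix M :: "nat ous" and x y
      assume M: "fcous M" "spec M \<subseteq> spec A \<union> spec B" and xy: "x \<in> carrier M" "y \<in> carrier M" "x \<noteq> y"
      have "dist M x y \<noteq> 0" using dzero[OF M(1) xy(1) xy(2)] xy(3) by simp
      moreover have "dist M x y \<in> spec M" using xy unfolding spec_def by blast
      ultimately have "dist M x y \<in> T" using M(2) unfolding T_def by blast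
      then have "dist M x y \<in> u ` {..<n}" by (simp only: uT)
      then show "\<exists>j<n. dist M x y = u j" by (metis imageE lessThan_iff)
    qed
    have okA: "spec_ok A n u" by (rule spok[OF fA(1)]) simp
    have okB: "spec_ok B n u" by (rule spok[OF fB(1)]) simp
    define m where "m = card (carrier B) * n"
    define \<Lambda> where "\<Lambda> = lab A n u"
    define r where "r = card \<Lambda>"
    have fL: "finite \<Lambda>" unfolding \<Lambda>_def by (rule lab_finite[OF fA(1)])
    obtain N :: nat where N: "partn_lst {..<N} (replicate k m) r" using ramsey_full[of "replicate k m" r] by blast
    define C where "C = UU n u N"
    have C: "C \<in> ?Ob"
    proof -
      obtain b where b: "b \<in> carrier B" using Bne by auto
      have "dist B b b \<in> spec B" using b unfolding spec_def by blast
      then have "0 \<in> spec B" using d0[OF fB(1) b] by simp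
      then have "insert 0 (u ` {..<n}) \<subseteq> S" using uT fA fB unfolding T_def by auto
      then have "spec C \<subseteq> S" using UU_spec[of n u N] unfolding C_def by (meson subset_trans)
      moreover have "fcous C" unfolding C_def by (rule UU_fcous[OF dec])
      ultimately show ?thesis by simp
    qed
    have gA: "good A n u (card (carrier A) * n) (can A n u)" using can_good[OF fA(1) dec okA] .
    have gB: "good B n u m (can B n u)" using can_good[OF fB(1) dec okB] unfolding m_def .
    have labB: "\<And>b. b \<in> carrier B \<Longrightarrow> set (can B n u b) \<subseteq> {..<m}"
      using gB unfolding good_def Plist_def by auto
    show ?thesis
    proof (intro bexI[OF _ C] allI impI)
      fix \<Sigma> :: "nat \<Rightarrow> (nat \<Rightarrow> nat) set"
      assume "\<Union> (\<Sigma> ` {1..k}) = hom A C \<and> (\<forall>i\<in>{1..k}. \<forall>j\<in>{1..k}. i \<noteq> j \<longrightarrow> \<Sigma> i \<inter> \<Sigma> j = {})"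
      then have Sig: "\<Union> (\<Sigma> ` {1..k}) = hom A C" by blast
      define col where "col f = (if \<exists>i<k. f \<in> \<Sigma> (Suc i) then SOME i. i < k \<and> f \<in> \<Sigma> (Suc i) else 0)" for f
      have col_lt: "\<And>f. col f < k" unfolding col_def using k by (auto intro: someI2_ex)
      have col_in: "\<And>f. f \<in> hom A C \<Longrightarrow> f \<in> \<Sigma> (Suc (col f))"
      proof -
        fix f assume "f \<in> hom A C"
        then have "f \<in> \<Union> (\<Sigma> ` {1..k})" using Sig by simp
        then obtain j where j: "j \<in> {1..k}" "f \<in> \<Sigma> j" by blast
        then have ex: "\<exists>i<k. f \<in> \<Sigma> (Suc i)" by (intro exI[of _ "j - 1"]) auto
        then show "f \<in> \<Sigma> (Suc (col f))" unfolding col_def by (auto intro: someI2_ex)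
      qed
      define \<chi> where "\<chi> X = col (emb A (\<lambda>a. map (psi \<Lambda> X) (can A n u a)))" for X
      have "\<chi> \<in> nsets {..<N} r \<rightarrow> {..<length (replicate k m)}" using col_lt unfolding \<chi>_def by auto
      then obtain i where i: "i < k" "monochromatic {..<N} m r \<chi> i"
        using N unfolding partn_lst_def by auto
      then obtain H where H: "H \<in> nsets {..<N} m" "\<chi> ` nsets H r \<subseteq> {i}"
        unfolding monochromatic_def by auto
      have Hf: "finite H" "card H = m" "H \<subseteq> {..<N}" using H(1) unfolding nsets_def by auto
      define \<phi> where "\<phi> j = sorted_list_of_set H ! j" for j
      have phi: "strict_mono_on {..<m} \<phi>" "\<phi> ` {..<m} \<subseteq> H"
        using enum_props[OF Hf(1,2)] unfolding \<phi>_def by auto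
      define w where "w = emb B (\<lambda>b. map \<phi> (can B n u b))"
      have phN: "\<phi> ` {..<m} \<subseteq> {..<N}" using phi(2) Hf(3) by (rule subset_trans)
      have w: "w \<in> hom B C" unfolding w_def C_def
        by (rule good_hom[OF fB(1) good_map[OF gB phi(1) labB phN]])
      show "\<exists>i\<in>{1..k}. \<exists>w\<in>hom B C. (\<lambda>f. compose (carrier A) w f) ` hom A B \<subseteq> \<Sigma> i"
      proof (intro bexI[of _ "Suc i"] bexI[OF _ w] subsetI)
        show "Suc i \<in> {1..k}" using i by auto
        fix F assume "F \<in> (\<lambda>f. compose (carrier A) w f) ` hom A B"
        then obtain g where g: "g \<in> hom A B" and F: "F = compose (carrier A) w g" by auto
        define \<gamma> where "\<gamma> l = \<phi> (bet A B n u g l)" for l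
        have bimg: "\<And>l. l \<in> \<Lambda> \<Longrightarrow> bet A B n u g l \<in> {..<m}"
        proof -
          fix l assume "l \<in> \<Lambda>"
          then obtain a where a: "a \<in> carrier A" "l \<in> set (can A n u a)" unfolding \<Lambda>_def lab_def by auto
          then have "bet A B n u g l \<in> set (can B n u (g a))"
            using bet_can[OF fA(1) fB(1) dec g a(1)] by simp
          then show "bet A B n u g l \<in> {..<m}" using labB hom_props(1)[OF g a(1) a(1)] by auto
        qed
        have gm: "strict_mono_on \<Lambda> \<gamma>"
        proof (rule strict_mono_onI)
          fix x y assume "x \<in> \<Lambda>" "y \<in> \<Lambda>" "x < y"
          then have "bet A B n u g x < bet A B n u g y"
            using bet_mono[OF fA(1) fB(1) dec g] unfolding \<Lambda>_def strict_mono_on_def by blast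
          then show "\<gamma> x < \<gamma> y" unfolding \<gamma>_def
            using phi(1) bimg \<open>x \<in> \<Lambda>\<close> \<open>y \<in> \<Lambda>\<close> unfolding strict_mono_on_def by blast
        qed
        have gH: "\<gamma> ` \<Lambda> \<subseteq> H" using bimg phi(2) unfolding \<gamma>_def by auto
        define X where "X = \<gamma> ` \<Lambda>"
        have "card X = r" unfolding X_def r_def
          using strict_mono_on_imp_inj_on[OF gm] by (simp add: card_image)
        then have XH: "X \<in> nsets H r" using gH Hf(1) unfolding X_def nsets_def by (auto intro: finite_subset)
        then have chiX: "\<chi> X = i" using H(2) by auto
        have canA_sub: "\<And>a. a \<in> carrier A \<Longrightarrow> set (can A n u a) \<subseteq> \<Lambda>" unfolding \<Lambda>_def lab_def by auto
        have Feq: "F = emb A (\<lambda>a. map (psi \<Lambda> X) (can A n u a))"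
        proof
          fix a show "F a = emb A (\<lambda>a. map (psi \<Lambda> X) (can A n u a)) a"
          proof (cases "a \<in> carrier A")
            case False then show ?thesis unfolding F emb_def compose_def by simp
          next
            case True
            have "map (psi \<Lambda> X) (can A n u a) = map \<gamma> (can A n u a)"
              using psi_eq[OF fL gm] canA_sub[OF True] unfolding X_def by (auto intro: map_cong)
            also have "\<dots> = map \<phi> (can B n u (g a))"
              using bet_can[OF fA(1) fB(1) dec g True] unfolding \<gamma>_def by simp
            finally show ?thesis unfolding F emb_def compose_def w_def
              using True hom_props(1)[OF g True True] by simp
          qed
        qed
        have "F \<in> hom A C"
        proof -
          have "emb A (\<lambda>a. map \<gamma> (can A n u a)) \<in> hom A C"
            unfolding C_def using good_hom[OF fA(1) good_map[OF gA gm canA_sub subset_trans[OF gH Hf(3)]]] by simp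
          moreover have "emb A (\<lambda>a. map \<gamma> (can A n u a)) = F"
          proof -
            have "\<And>a. a \<in> carrier A \<Longrightarrow> map \<gamma> (can A n u a) = map (psi \<Lambda> X) (can A n u a)"
            proof -
              fix a assume a: "a \<in> carrier A"
              show "map \<gamma> (can A n u a) = map (psi \<Lambda> X) (can A n u a)"
                using psi_eq[OF fL gm] canA_sub[OF a] unfolding X_def by (intro map_cong) auto
            qed
            then show ?thesis unfolding Feq emb_def by (intro ext) auto
          qed
          ultimately show ?thesis by simp
        qed
        then have "F \<in> \<Sigma> (Suc (col F))" by (rule col_in)
        moreover have "col F = i" using chiX unfolding \<chi>_def Feq by simp
        ultimately show "F \<in> \<Sigma> (Suc i)" by simp
      qed
    qed
  qed
qed

theorem theorem4p2:
  shows "(\<forall>S :: real set. S \<subseteq> {0..} \<longrightarrow>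
            ramsey_property {M :: nat ous. fcous M \<and> spec M \<subseteq> S})
         \<and> ramsey_property {M :: nat ous. fcous M}"
  using main_ramsey[of UNIV] main_ramsey by simp

end
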